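(* Let $T = \{t_1,\dots,t_n\}$ be a set of finite traces over $\Sigma = 2^{\mathrm{AP}}$ and let $\varphi = \forall\pi_1\dots\forall\pi_{k_T}.\ \psi$ be a universally-safe HyperLTL formula. Then $T$ is a bad prefix of $\varphi$ (i.e., $T \in \mathrm{Bad}(\mathcal{L}(\varphi))$) if and only if the HyperLTL formula $$\varphi' := \exists\pi'_1\dots\exists\pi'_n\ \forall\pi_1\dots\forall\pi_{k_T}.\ \pi'_1 \ge t_1 \wedge \dots \wedge \pi'_n \ge t_n \wedge \psi$$ is unsatisfiable.
   Context: HyperLTL formulas over a set of atomic propositions AP are generated by $\psi ::= \exists\pi.\psi \mid \forall\pi.\psi \mid \phi$, $\phi ::= a_\pi \mid \neg\phi \mid \phi\vee\phi \mid \bigcirc\phi \mid \phi\,\mathcal{U}\,\phi$. For $T \subseteq \Sigma^\omega$ and a trace assignment $\Pi$: $\Pi \models_T \exists\pi.\psi$ iff some $t \in T$ has $\Pi[\pi\mapsto t]\models_T\psi$; $\forall$ dually; $\Pi\models_T a_\pi$ iff $a \in \Pi(\pi)[0]$; Boolean connectives as usual; $\Pi\models_T\bigcirc\phi$ iff $\Pi[1,\infty]\models_T\phi$; $\Pi\models_T\phi_1\mathcal{U}\phi_2$ iff $\exists i\ge0$ with $\Pi[i,\infty]\models_T\phi_2$ and $\Pi[j,\infty]\models_T\phi_1$ for all $j<i$. $T$ satisfies $\varphi$ if the empty assignment satisfies it; $\mathcal{L}(\varphi) = \{T \subseteq \Sigma^\omega \mid T \text{ satisfies } \varphi\}$; a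 formula is satisfiable if some (nonempty) set of traces satisfies it. A universally-safe HyperLTL formula has the form $\forall\pi_1\dots\forall\pi_k.\psi$ with $\psi$ a quantifier-free safety formula. For a trace variable $\pi'$ and finite trace $t = t[0]\cdots t[m-1]$, $\pi' \ge t$ abbreviates the quantifier-free formula $\bigwedge_{j<m}\bigcirc^j\big(\bigwedge_{a\in t[j]} a_{\pi'} \wedge \bigwedge_{a \notin t[j]} \neg a_{\pi'}\big)$, stating that $t$ is a prefix of the trace bound to $\pi'$. For finite $T \subseteq \Sigma^*$ and $T' \subseteq \Sigma^\omega$, $T \le T'$ means every $t \in T$ is a prefix of some $t' \in T'$; $\mathrm{Bad}(\mathbf{S}) = \{T \text{ finite} \mid \forall T'.\ T \le T' \Rightarrow T' \notin \mathbf{S}\}$. *)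

theory Defs
  imports Main
begin

type_synonym 'a trace = "nat \<Rightarrow> 'a set"
type_synonym 'a ftrace = "'a set list"
type_synonym ('a,'v) assignment = "'v \<Rightarrow> 'a trace option"

datatype ('a,'v) qf =
    Prop 'a 'v
  | Neg "('a,'v) qf"
  | Or "('a,'v) qf" "('a,'v) qf"
  | Next "('a,'v) qf"
  | Until "('a,'v) qf" "('a,'v) qf"

datatype ('a,'v) hyper =
    Exists 'v "('a,'v) hyper"
  | Forall 'v "('a,'v) hyper"
  | QF "('a,'v) qf"

fun qfv :: "('a,'v) qf \<Rightarrow> 'v set" where
  "qfv (Prop a v) = {v}"
| "qfv (Neg p) = qfv p"
| "qfv (Or p q) = qfv p \<union> qfv q"
| "qfv (Next p) = qfv p"
| "qfv (Until p q) = qfv p \<union> qfv q"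

definition shift :: "('a,'v) assignment \<Rightarrow> nat \<Rightarrow> ('a,'v) assignment" where
  "shift \<Pi> i = (\<lambda>v. map_option (\<lambda>t j. t (i + j)) (\<Pi> v))"

fun qsat :: "('a,'v) assignment \<Rightarrow> ('a,'v) qf \<Rightarrow> bool" where
  "qsat \<Pi> (Prop a v) = (case \<Pi> v of Some t \<Rightarrow> a \<in> t 0 | None \<Rightarrow> False)"
| "qsat \<Pi> (Neg p) = (\<not> qsat \<Pi> p)"
| "qsat \<Pi> (Or p q) = (qsat \<Pi> p \<or> qsat \<Pi> q)"
| "qsat \<Pi> (Next p) = qsat (shift \<Pi> 1) p"
| "qsat \<Pi> (Until p q) =
     (\<exists>i. qsat (shift \<Pi> i) q \<and> (\<forall>j<i. qsat (shift \<Pi> j) p))"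

fun hsat :: "'a trace set \<Rightarrow> ('a,'v) assignment \<Rightarrow> ('a,'v) hyper \<Rightarrow> bool" where
  "hsat T \<Pi> (Exists v p) = (\<exists>t\<in>T. hsat T (\<Pi>(v \<mapsto> t)) p)"
| "hsat T \<Pi> (Forall v p) = (\<forall>t\<in>T. hsat T (\<Pi>(v \<mapsto> t)) p)"
| "hsat T \<Pi> (QF p) = qsat \<Pi> p"

definition satisfies :: "'a trace set \<Rightarrow> ('a,'v) hyper \<Rightarrow> bool" where
  "satisfies T \<phi> = hsat T Map.empty \<phi>"

definition lang :: "('a,'v) hyper \<Rightarrow> 'a trace set set" where
  "lang \<phi> = {T. satisfies T \<phi>}"

definition satisfiable :: "('a,'v) hyper \<Rightarrow> bool" where
  "satisfiable \<phi> = (\<exists>T. T \<noteq> {} \<and> satisfies T \<phi>)"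

definition foralls :: "'v list \<Rightarrow> ('a,'v) hyper \<Rightarrow> ('a,'v) hyper" where
  "foralls vs p = foldr Forall vs p"

definition existss :: "'v list \<Rightarrow> ('a,'v) hyper \<Rightarrow> ('a,'v) hyper" where
  "existss vs p = foldr Exists vs p"

definition qf_safety :: "('a,'v) qf \<Rightarrow> bool" where
  "qf_safety \<psi> = (\<forall>\<Pi>. \<not> qsat \<Pi> \<psi> \<longrightarrow>
      (\<exists>i. \<forall>\<Pi>'. dom \<Pi>' = dom \<Pi> \<and>
           (\<forall>v t t'. \<Pi> v = Some t \<longrightarrow> \<Pi>' v = Some t' \<longrightarrow> (\<forall>j<i. t j = t' j))
           \<longrightarrow> \<not> qsat \<Pi>' \<psi>))"

definition And :: "('a,'v) qf \<Rightarrow> ('a,'v) qf \<Rightarrow> ('a,'v) qf" where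
  "And p q = Neg (Or (Neg p) (Neg q))"

fun nexts :: "nat \<Rightarrow> ('a,'v) qf \<Rightarrow> ('a,'v) qf" where
  "nexts 0 p = p"
| "nexts (Suc n) p = Next (nexts n p)"

definition aps :: "'a::finite list" where
  "aps = (SOME xs. set xs = UNIV \<and> distinct xs)"

definition lit :: "'v \<Rightarrow> 'a set \<Rightarrow> 'a \<Rightarrow> ('a,'v) qf" where
  "lit v s a = (if a \<in> s then Prop a v else Neg (Prop a v))"

definition letter :: "'v \<Rightarrow> 'a::finite set \<Rightarrow> ('a,'v) qf" where
  "letter v s = foldr (\<lambda>a acc. And (lit v s a) acc) (tl aps) (lit v s (hd aps))"

text \<open>prefix_conj v t chi  =  (v \<ge> t) \<and> chi\<close>
definition prefix_conj :: "'v \<Rightarrow> 'a::finite ftrace \<Rightarrow> ('a,'v) qf \<Rightarrow> ('a,'v) qf" where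
  "prefix_conj v t \<chi> = foldr (\<lambda>j acc. And (nexts j (letter v (t ! j))) acc) [0..<length t] \<chi>"

definition prefix_conjs :: "('v \<times> 'a::finite ftrace) list \<Rightarrow> ('a,'v) qf \<Rightarrow> ('a,'v) qf" where
  "prefix_conjs xs \<psi> = foldr (\<lambda>(v,t) acc. prefix_conj v t acc) xs \<psi>"

definition prefix_le :: "'a ftrace set \<Rightarrow> 'a trace set \<Rightarrow> bool" where
  "prefix_le T T' = (\<forall>t\<in>T. \<exists>t'\<in>T'. \<forall>j<length t. t ! j = t' j)"

definition Bad :: "'a trace set set \<Rightarrow> 'a ftrace set set" where
  "Bad S = {T. finite T \<and> (\<forall>T'. prefix_le T T' \<longrightarrow> T' \<notin> S)}"

end

theory Submission
  imports Defs
begin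

lemma qsat_agree:
  "(\<forall>v\<in>qfv \<chi>. \<Pi> v = \<Pi>' v) \<Longrightarrow> qsat \<Pi> \<chi> = qsat \<Pi>' \<chi>"
proof (induction \<chi> arbitrary: \<Pi> \<Pi>')
  case (Next p)
  have "\<forall>v\<in>qfv p. shift \<Pi> 1 v = shift \<Pi>' 1 v" using Next.prems by (simp add: shift_def)
  then show ?case using Next.IH by simp
next
  case (Until p q)
  have "\<And>i. \<forall>v\<in>qfv p. shift \<Pi> i v = shift \<Pi>' i v" "\<And>i. \<forall>v\<in>qfv q. shift \<Pi> i v = shift \<Pi>' i v"
    using Until.prems by (simp_all add: shift_def)
  then show ?case using Until.IH by (metis qsat.simps(5))
next
  case (Or p q)
  have "qsat \<Pi> p = qsat \<Pi>' p" "qsat \<Pi> q = qsat \<Pi>' q" using Or.prems by (auto intro!: Or.IH)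
  then show ?case by simp
qed auto

lemma hsat_existss:
  "hsat T \<Pi> (existss ps \<Phi>) \<longleftrightarrow> (\<exists>\<Pi>'. (\<forall>v\<in>set ps. \<Pi>' v \<in> Some ` T) \<and> (\<forall>v. v \<notin> set ps \<longrightarrow> \<Pi>' v = \<Pi> v) \<and> hsat T \<Pi>' \<Phi>)"
proof (induction ps arbitrary: \<Pi>)
  case Nil
  have "\<And>\<Pi>''. \<forall>v. \<Pi>'' v = \<Pi> v \<Longrightarrow> \<Pi>'' = \<Pi>" by (simp add: fun_eq_iff)
  then show ?case by (auto simp: existss_def)
next
  case (Cons p ps)
  have e: "existss (p # ps) \<Phi> = Exists p (existss ps \<Phi>)" by (simp add: existss_def)
  show ?case
  proof
    assume "hsat T \<Pi> (existss (p # ps) \<Phi>)"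
    then obtain t where t: "t \<in> T" "hsat T (\<Pi>(p \<mapsto> t)) (existss ps \<Phi>)" by (auto simp: e)
    then obtain \<Pi>' where "(\<forall>v\<in>set ps. \<Pi>' v \<in> Some ` T)" "(\<forall>v. v \<notin> set ps \<longrightarrow> \<Pi>' v = (\<Pi>(p \<mapsto> t)) v)" "hsat T \<Pi>' \<Phi>"
      using Cons.IH by blast
    then show "\<exists>\<Pi>'. (\<forall>v\<in>set (p#ps). \<Pi>' v \<in> Some ` T) \<and> (\<forall>v. v \<notin> set (p#ps) \<longrightarrow> \<Pi>' v = \<Pi> v) \<and> hsat T \<Pi>' \<Phi>"
      using t(1) by (intro exI[of _ \<Pi>']) (auto split: if_splits)
  next
    assume "\<exists>\<Pi>'. (\<forall>v\<in>set (p#ps). \<Pi>' v \<in> Some ` T) \<and> (\<forall>v. v \<notin> set (p#ps) \<longrightarrow> \<Pi>' v = \<Pi> v) \<and> hsat T \<Pi>' \<Phi>"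
    then obtain \<Pi>' where a: "\<forall>v\<in>set (p#ps). \<Pi>' v \<in> Some ` T" "\<forall>v. v \<notin> set (p#ps) \<longrightarrow> \<Pi>' v = \<Pi> v" "hsat T \<Pi>' \<Phi>" by blast
    then obtain t where t: "t \<in> T" "\<Pi>' p = Some t" by auto
    have "hsat T (\<Pi>(p \<mapsto> t)) (existss ps \<Phi>)"
      using Cons.IH a t by (intro iffD2[OF Cons.IH] exI[of _ \<Pi>']) auto
    then show "hsat T \<Pi> (existss (p # ps) \<Phi>)" using t by (auto simp: e)
  qed
qed

lemma hsat_foralls:
  "hsat T \<Pi> (foralls ps \<Phi>) \<longleftrightarrow> (\<forall>\<Pi>'. (\<forall>v\<in>set ps. \<Pi>' v \<in> Some ` T) \<and> (\<forall>v. v \<notin> set ps \<longrightarrow> \<Pi>' v = \<Pi> v) \<longrightarrow> hsat T \<Pi>' \<Phi>)"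
proof (induction ps arbitrary: \<Pi>)
  case Nil
  have "\<And>\<Pi>''. \<forall>v. \<Pi>'' v = \<Pi> v \<Longrightarrow> \<Pi>'' = \<Pi>" by (simp add: fun_eq_iff)
  then show ?case by (auto simp: foralls_def)
next
  case (Cons p ps)
  have e: "foralls (p # ps) \<Phi> = Forall p (foralls ps \<Phi>)" by (simp add: foralls_def)
  show ?case
  proof
    assume h: "hsat T \<Pi> (foralls (p # ps) \<Phi>)"
    show "\<forall>\<Pi>'. (\<forall>v\<in>set (p#ps). \<Pi>' v \<in> Some ` T) \<and> (\<forall>v. v \<notin> set (p#ps) \<longrightarrow> \<Pi>' v = \<Pi> v) \<longrightarrow> hsat T \<Pi>' \<Phi>"
    proof (intro allI impI)
      fix \<Pi>' assume a: "(\<forall>v\<in>set (p#ps). \<Pi>' v \<in> Some ` T) \<and> (\<forall>v. v \<notin> set (p#ps) \<longrightarrow> \<Pi>' v = \<Pi> v)"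
      then obtain t where t: "t \<in> T" "\<Pi>' p = Some t" by auto
      have "hsat T (\<Pi>(p \<mapsto> t)) (foralls ps \<Phi>)" using h t by (auto simp: e)
      moreover have "(\<forall>v\<in>set ps. \<Pi>' v \<in> Some ` T) \<and> (\<forall>v. v \<notin> set ps \<longrightarrow> \<Pi>' v = (\<Pi>(p \<mapsto> t)) v)"
        using a t by auto
      ultimately show "hsat T \<Pi>' \<Phi>" using Cons.IH by blast
    qed
  next
    assume h: "\<forall>\<Pi>'. (\<forall>v\<in>set (p#ps). \<Pi>' v \<in> Some ` T) \<and> (\<forall>v. v \<notin> set (p#ps) \<longrightarrow> \<Pi>' v = \<Pi> v) \<longrightarrow> hsat T \<Pi>' \<Phi>"
    have "hsat T (\<Pi>(p \<mapsto> t)) (foralls ps \<Phi>)" if "t \<in> T" for t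
    proof (rule iffD2[OF Cons.IH], intro allI impI)
      fix \<Pi>'' assume b: "(\<forall>v\<in>set ps. \<Pi>'' v \<in> Some ` T) \<and> (\<forall>v. v \<notin> set ps \<longrightarrow> \<Pi>'' v = (\<Pi>(p \<mapsto> t)) v)"
      have "\<Pi>'' p \<in> Some ` T" using b that by (cases "p \<in> set ps") auto
      then have "(\<forall>v\<in>set (p#ps). \<Pi>'' v \<in> Some ` T) \<and> (\<forall>v. v \<notin> set (p#ps) \<longrightarrow> \<Pi>'' v = \<Pi> v)"
        using b by auto
      then show "hsat T \<Pi>'' \<Phi>" using h by blast
    qed
    then show "hsat T \<Pi> (foralls (p # ps) \<Phi>)" by (auto simp: e)
  qed
qed

lemma aps_prop: "set (aps::'a::finite list) = UNIV \<and> distinct (aps::'a list)"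
proof -
  obtain xs :: "'a list" where "set xs = UNIV \<and> distinct xs" using finite_distinct_list[OF finite_UNIV] by blast
  then show ?thesis unfolding aps_def by (metis (mono_tags, lifting) someI)
qed

lemma qsat_And[simp]: "qsat \<Pi> (And p q) = (qsat \<Pi> p \<and> qsat \<Pi> q)"
  by (simp add: And_def)

lemma qsat_foldr_lit:
  "qsat \<Pi> (foldr (\<lambda>a acc. And (lit v s a) acc) xs b) = ((\<forall>a\<in>set xs. qsat \<Pi> (lit v s a)) \<and> qsat \<Pi> b)"
  by (induction xs) auto

lemma qsat_letter:
  assumes "\<Pi> v = Some t"
  shows "qsat \<Pi> (letter v (s::'a::finite set)) = (t 0 = s)"
proof -
  have ne: "(aps::'a list) \<noteq> []" using aps_prop[where 'a='a] by auto
  have "set (aps::'a list) = insert (hd aps) (set (tl aps))" using ne by (metis list.collapse list.set(2))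
  then have "qsat \<Pi> (letter v s) = (\<forall>a\<in>set (aps::'a list). qsat \<Pi> (lit v s a))"
    unfolding letter_def qsat_foldr_lit by auto
  also have "\<dots> = (\<forall>a. a \<in> t 0 \<longleftrightarrow> a \<in> s)" using aps_prop[where 'a='a] assms
    by (auto simp: lit_def)
  also have "\<dots> = (t 0 = s)" by blast
  finally show ?thesis .
qed

lemma shift_shift: "shift (shift \<Pi> a) b = shift \<Pi> (a + b)"
  by (simp add: shift_def fun_eq_iff option.map_comp o_def add.assoc)

lemma shift_0: "shift \<Pi> 0 = \<Pi>"
  by (simp add: shift_def fun_eq_iff option.map_ident)

lemma qsat_nexts: "qsat \<Pi> (nexts j p) = qsat (shift \<Pi> j) p"
  by (induction j arbitrary: \<Pi>) (auto simp: shift_0 shift_shift)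

lemma qsat_prefix_conj_aux:
  assumes "\<Pi> v = Some t'"
  shows "qsat \<Pi> (foldr (\<lambda>j acc. And (nexts j (letter v ((t::'a::finite ftrace) ! j))) acc) js \<chi>)
     = ((\<forall>j\<in>set js. t' j = t ! j) \<and> qsat \<Pi> \<chi>)"
proof (induction js)
  case (Cons j js)
  have "shift \<Pi> j v = Some (\<lambda>k. t' (j + k))" using assms by (simp add: shift_def)
  then have "qsat \<Pi> (nexts j (letter v (t ! j))) = (t' j = t ! j)"
    by (simp add: qsat_nexts qsat_letter)
  then show ?case using Cons by auto
qed simp

lemma qsat_prefix_conj:
  assumes "\<Pi> v = Some t'"
  shows "qsat \<Pi> (prefix_conj v t \<chi>) = ((\<forall>j<length t. t' j = t ! j) \<and> qsat \<Pi> \<chi>)"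
  unfolding prefix_conj_def using qsat_prefix_conj_aux[of \<Pi> v t' t] assms by auto

lemma qsat_prefix_conjs:
  assumes "\<forall>v\<in>fst ` set xs. \<Pi> v \<noteq> None"
  shows "qsat \<Pi> (prefix_conjs xs \<psi>) = ((\<forall>(v,t)\<in>set xs. \<forall>j<length t. the (\<Pi> v) j = t ! j) \<and> qsat \<Pi> \<psi>)"
  using assms
proof (induction xs)
  case Nil
  then show ?case by (simp add: prefix_conjs_def)
next
  case (Cons x xs)
  obtain v t where x: "x = (v, t)" by force
  then obtain t' where t': "\<Pi> v = Some t'" using Cons.prems by auto
  have "prefix_conjs (x # xs) \<psi> = prefix_conj v t (prefix_conjs xs \<psi>)"
    by (simp add: prefix_conjs_def x)
  then show ?case using Cons x t' by (simp add: qsat_prefix_conj)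
qed

lemma fst_mem: "(v, t) \<in> set xs \<Longrightarrow> v \<in> fst ` set xs"
  by (rule rev_image_eqI) auto

theorem theorem9:
  fixes ts :: "'a::finite ftrace list" and vs ps :: "'v list" and \<psi> :: "('a,'v) qf"
  assumes "ts \<noteq> []"
    and "qf_safety \<psi>"
    and "qfv \<psi> \<subseteq> set vs"
    and "length ps = length ts"
    and "distinct ps"
    and "set ps \<inter> set vs = {}"
  shows "set ts \<in> Bad (lang (foralls vs (QF \<psi>))) \<longleftrightarrow>
         \<not> satisfiable (existss ps (foralls vs (QF (prefix_conjs (zip ps ts) \<psi>))))"
proof -
  let ?xs = "zip ps ts"
  let ?ext = "\<lambda>(t::'a ftrace) (t'::'a trace). \<forall>j<length t. t ! j = t' j"
  have sat_all: "satisfies T' (foralls vs (QF \<psi>)) \<longleftrightarrow>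
     (\<forall>\<Pi>'. (\<forall>v\<in>set vs. \<Pi>' v \<in> Some ` T') \<and> (\<forall>v. v \<notin> set vs \<longrightarrow> \<Pi>' v = None) \<longrightarrow> qsat \<Pi>' \<psi>)" for T'
    unfolding satisfies_def hsat_foralls by simp
  have fst_xs: "fst ` set ?xs = set ps" using assms(4) by (metis list.set_map map_fst_zip)
  have map_of_xs: "map_of ?xs v = Some t" if "(v, t) \<in> set ?xs" for v t
    using that assms(5) assms(4) by (simp add: distinct_zipI1 map_of_is_SomeI)
  have ts_in: "\<exists>v. (v, t) \<in> set ?xs" if tin: "t \<in> set ts" for t
  proof -
    obtain i where "i < length ts" "ts ! i = t" using tin by (auto simp: in_set_conv_nth)
    then have "(ps ! i, t) \<in> set ?xs" using assms(4) by (auto simp: set_zip)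
    then show ?thesis by blast
  qed
  show ?thesis
  proof
    assume bad: "set ts \<in> Bad (lang (foralls vs (QF \<psi>)))"
    show "\<not> satisfiable (existss ps (foralls vs (QF (prefix_conjs ?xs \<psi>))))"
    proof
      assume "satisfiable (existss ps (foralls vs (QF (prefix_conjs ?xs \<psi>))))"
      then obtain T' where T'ne: "T' \<noteq> {}" and hT: "hsat T' Map.empty (existss ps (foralls vs (QF (prefix_conjs ?xs \<psi>))))"
        unfolding satisfiable_def satisfies_def by blast
      then obtain \<Pi>1 where p1: "\<forall>v\<in>set ps. \<Pi>1 v \<in> Some ` T'"
        and h0: "hsat T' \<Pi>1 (foralls vs (QF (prefix_conjs ?xs \<psi>)))"
        unfolding hsat_existss by blast
      have h: "\<forall>\<Pi>2. (\<forall>v\<in>set vs. \<Pi>2 v \<in> Some ` T') \<and> (\<forall>v. v \<notin> set vs \<longrightarrow> \<Pi>2 v = \<Pi>1 v) \<longrightarrow>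
               qsat \<Pi>2 (prefix_conjs ?xs \<psi>)"
        using h0 unfolding hsat_foralls hsat.simps by blast
      obtain t0 where t0: "t0 \<in> T'" using T'ne by blast
      have key: "\<And>\<Pi>'. (\<forall>v\<in>set vs. \<Pi>' v \<in> Some ` T') \<Longrightarrow>
          (\<forall>(v,t)\<in>set ?xs. \<forall>j<length t. the (\<Pi>1 v) j = t ! j) \<and> qsat (\<lambda>v. if v \<in> set vs then \<Pi>' v else \<Pi>1 v) \<psi>"
      proof -
        fix \<Pi>' assume a: "\<forall>v\<in>set vs. \<Pi>' v \<in> Some ` T'"
        let ?\<Pi>2 = "\<lambda>v. if v \<in> set vs then \<Pi>' v else \<Pi>1 v"
        have a2: "(\<forall>v\<in>set vs. ?\<Pi>2 v \<in> Some ` T') \<and> (\<forall>v. v \<notin> set vs \<longrightarrow> ?\<Pi>2 v = \<Pi>1 v)"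
          using a by simp
        have q: "qsat ?\<Pi>2 (prefix_conjs ?xs \<psi>)"
          using mp[OF spec[OF h, of "\<lambda>v. if v \<in> set vs then \<Pi>' v else \<Pi>1 v"] a2] .
        have eq: "?\<Pi>2 v = \<Pi>1 v" if vin: "v \<in> fst ` set ?xs" for v
        proof -
          have "v \<notin> set vs" using vin fst_xs assms(6) by blast
          then show ?thesis by simp
        qed
        have nn: "\<forall>v\<in>fst ` set ?xs. ?\<Pi>2 v \<noteq> None"
        proof
          fix v assume vin: "v \<in> fst ` set ?xs"
          then have "v \<in> set ps" using fst_xs by blast
          then have "\<Pi>1 v \<in> Some ` T'" using p1 by blast
          then show "?\<Pi>2 v \<noteq> None" using eq[OF vin] by auto
        qed
        have eq2: "?\<Pi>2 v = \<Pi>1 v" if "(v, t) \<in> set ?xs" for v t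
        proof -
          have "v \<in> fst ` set ?xs" using rev_image_eqI[OF that, of v fst] by simp
          then show ?thesis by (rule eq)
        qed
        have c: "(\<forall>(v,t)\<in>set ?xs. \<forall>j<length t. the (?\<Pi>2 v) j = t ! j) \<and> qsat ?\<Pi>2 \<psi>"
          using q unfolding qsat_prefix_conjs[OF nn] .
        then have "(\<forall>(v,t)\<in>set ?xs. \<forall>j<length t. the (\<Pi>1 v) j = t ! j)"
        proof (intro ballI, clarify)
          fix v t j assume vt: "(v, t) \<in> set ?xs" and j: "j < length t"
          have "the (?\<Pi>2 v) j = t ! j" using c vt j by blast
          then show "the (\<Pi>1 v) j = t ! j" using eq2[OF vt] by simp
        qed
        then show "(\<forall>(v,t)\<in>set ?xs. \<forall>j<length t. the (\<Pi>1 v) j = t ! j) \<and> qsat ?\<Pi>2 \<psi>"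
          using c by blast
      qed
      have "prefix_le (set ts) T'"
        unfolding prefix_le_def
      proof
        fix t assume "t \<in> set ts"
        then obtain v where v: "(v, t) \<in> set ?xs" using ts_in by blast
        then have "v \<in> set ps" using fst_xs fst_mem[OF v] by simp
        then obtain t' where t': "\<Pi>1 v = Some t'" "t' \<in> T'" using p1 by blast
        have "\<forall>v\<in>set vs. (\<lambda>_. Some t0) v \<in> Some ` T'" using t0 by auto
        from bspec[OF conjunct1[OF key[OF this]] v]
        have "\<forall>j<length t. the (\<Pi>1 v) j = t ! j" by simp
        then show "\<exists>t'\<in>T'. \<forall>j<length t. t ! j = t' j" using t' by (intro bexI[of _ t']) auto
      qed
      moreover have "satisfies T' (foralls vs (QF \<psi>))"
        unfolding sat_all
      proof (intro allI impI)
        fix \<Pi>' assume a: "(\<forall>v\<in>set vs. \<Pi>' v \<in> Some ` T') \<and> (\<forall>v. v \<notin> set vs \<longrightarrow> \<Pi>' v = None)"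
        have q: "qsat (\<lambda>v. if v \<in> set vs then \<Pi>' v else \<Pi>1 v) \<psi>" using conjunct2[OF key[OF conjunct1[OF a]]] .
        have "\<forall>v\<in>qfv \<psi>. (\<lambda>v. if v \<in> set vs then \<Pi>' v else \<Pi>1 v) v = \<Pi>' v" using assms(3) by auto
        from qsat_agree[OF this] q show "qsat \<Pi>' \<psi>" by simp
      qed
      ultimately show False using bad unfolding Bad_def lang_def by blast
    qed
  next
    assume ns: "\<not> satisfiable (existss ps (foralls vs (QF (prefix_conjs ?xs \<psi>))))"
    show "set ts \<in> Bad (lang (foralls vs (QF \<psi>)))"
      unfolding Bad_def lang_def
    proof (intro CollectI conjI allI impI finite_set)
      fix T' assume pl: "prefix_le (set ts) T'"
      show "T' \<notin> {T. satisfies T (foralls vs (QF \<psi>))}"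
      proof
        assume "T' \<in> {T. satisfies T (foralls vs (QF \<psi>))}"
        then have st: "\<forall>\<Pi>'. (\<forall>v\<in>set vs. \<Pi>' v \<in> Some ` T') \<and> (\<forall>v. v \<notin> set vs \<longrightarrow> \<Pi>' v = None) \<longrightarrow> qsat \<Pi>' \<psi>"
          using sat_all[of T'] by simp
        have T'ne: "T' \<noteq> {}" using pl assms(1) unfolding prefix_le_def by (cases ts) auto
        define \<Pi>1 where "\<Pi>1 = (\<lambda>v. case map_of ?xs v of None \<Rightarrow> None
             | Some t \<Rightarrow> Some (SOME t'. t' \<in> T' \<and> ?ext t t'))"
        have ch: "(SOME t'. t' \<in> T' \<and> ?ext t t') \<in> T' \<and> ?ext t (SOME t'. t' \<in> T' \<and> ?ext t t')"
          if tin: "t \<in> set ts" for t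
        proof -
          obtain t' where "t' \<in> T' \<and> ?ext t t'" using pl tin unfolding prefix_le_def by blast
          then show ?thesis by (rule someI[where P="\<lambda>t'. t' \<in> T' \<and> ?ext t t'"])
        qed
        have tsx: "t \<in> set ts" if "(v, t) \<in> set ?xs" for v t using that set_zip_rightD by fast
        have vps: "v \<notin> set vs" if "(v, t) \<in> set ?xs" for v t
        proof -
          have "v \<in> set ps" using fst_mem[OF that] fst_xs by simp
          then show ?thesis using assms(6) by blast
        qed
        have "hsat T' Map.empty (existss ps (foralls vs (QF (prefix_conjs ?xs \<psi>))))"
          unfolding hsat_existss hsat_foralls
        proof (intro exI[of _ \<Pi>1] conjI allI impI ballI)
          fix v assume "v \<in> set ps"
          then have "v \<in> fst ` set ?xs" using fst_xs by simp
          then obtain x where x: "x \<in> set ?xs" "v = fst x" by blast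
          then have vt: "(v, snd x) \<in> set ?xs" by simp
          have e1: "\<Pi>1 v = Some (SOME t'. t' \<in> T' \<and> ?ext (snd x) t')"
            unfolding \<Pi>1_def using map_of_xs[OF vt] by simp
          have "Some (SOME t'. t' \<in> T' \<and> ?ext (snd x) t') \<in> Some ` T'"
            using imageI[OF conjunct1[OF ch[OF tsx[OF vt]]], of Some] .
          then show "\<Pi>1 v \<in> Some ` T'" using e1 by (simp only:)
        next
          fix v :: 'v assume "v \<notin> set ps"
          then have "map_of ?xs v = None" using fst_xs by (simp add: map_of_eq_None_iff)
          then show "\<Pi>1 v = Map.empty v" unfolding \<Pi>1_def by simp
        next
          fix \<Pi>2 assume a: "(\<forall>v\<in>set vs. \<Pi>2 v \<in> Some ` T') \<and> (\<forall>v. v \<notin> set vs \<longrightarrow> \<Pi>2 v = \<Pi>1 v)"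
          have eq: "\<Pi>2 v = Some (SOME t'. t' \<in> T' \<and> ?ext t t')" if vt: "(v, t) \<in> set ?xs" for v t
          proof -
            have "\<Pi>2 v = \<Pi>1 v" using a vps[OF vt] by blast
            then show ?thesis using map_of_xs[OF vt] unfolding \<Pi>1_def by simp
          qed
          have nn: "\<forall>v\<in>fst ` set ?xs. \<Pi>2 v \<noteq> None"
          proof
            fix v assume "v \<in> fst ` set ?xs"
            then obtain x where x: "x \<in> set ?xs" "v = fst x" by blast
            then have vt: "(v, snd x) \<in> set ?xs" by simp
            show "\<Pi>2 v \<noteq> None" using eq[OF vt] by simp
          qed
          have "\<forall>(v,t)\<in>set ?xs. \<forall>j<length t. the (\<Pi>2 v) j = t ! j"
          proof (intro ballI, clarify)
            fix v t j assume vt: "(v, t) \<in> set ?xs" and j: "j < length t"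
            have "?ext t (SOME t'. t' \<in> T' \<and> ?ext t t')" using ch[OF tsx[OF vt]] by blast
            then show "the (\<Pi>2 v) j = t ! j" using eq[OF vt] j by simp
          qed
          moreover have "qsat \<Pi>2 \<psi>"
          proof -
            let ?\<Pi>3 = "\<lambda>v. if v \<in> set vs then \<Pi>2 v else None"
            have a3: "(\<forall>v\<in>set vs. ?\<Pi>3 v \<in> Some ` T') \<and> (\<forall>v. v \<notin> set vs \<longrightarrow> ?\<Pi>3 v = None)"
              using a by simp
            have q: "qsat ?\<Pi>3 \<psi>" using mp[OF spec[OF st, of "\<lambda>v. if v \<in> set vs then \<Pi>2 v else None"] a3] .
            have "\<forall>v\<in>qfv \<psi>. ?\<Pi>3 v = \<Pi>2 v" using assms(3) by auto
            from qsat_agree[OF this] q show ?thesis by simp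
          qed
          ultimately show "hsat T' \<Pi>2 (QF (prefix_conjs ?xs \<psi>))"
            using qsat_prefix_conjs[OF nn] by simp
        qed
        then show False using ns T'ne unfolding satisfiable_def satisfies_def by blast
      qed
    qed
  qed
qed

end
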